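(* Let $F=\breve F(\alpha_1,\dots,\alpha_t)$ be a fence, let $i\in[t]$ with $\alpha_i\ge2$, let $v$ be the valley of $S_i$ (if it exists) and $p$ the peak of $S_i$ (if it exists). Then for each $j\in[\beta_i]$, as functions on $\mathcal J(F)$, \[ \alpha_i\hat\chi_{(i,j)}-j\hat\chi_p-(\alpha_i-j)\hat\chi_v=\mathbf 1(S_i\text{ has no valley})(\alpha_i-j)-(\alpha_i-j)\!\!\sum_{s_{(i,1)}\trianglelefteq u\trianglelefteq s_{(i,j)}}\!\!\#[s_{(i,1)},u]\,T_u-j\!\!\sum_{s_{(i,j)}\vartriangleleft u\trianglelefteq s_{(i,\beta_i)}}\!\!\#[u,s_{(i,\beta_i)}]\,T_u, \] where $[a,b]$ denotes an interval of $F$ and $\mathbf 1(\cdot)$ is $1$ if the statement holds and $0$ otherwise.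
   Context: Fences: let $\alpha=(\alpha_1,\dots,\alpha_t)$ be positive integers with $t\ge2$ and $\alpha_1,\alpha_t\ge2$. Put $a_0=0$, $a_i=\alpha_1+\dots+\alpha_i$, $n=a_t-1$. The fence $\breve F(\alpha)$ is the poset (order $\trianglelefteq$) on $\{x_1,\dots,x_n\}$ whose cover relations are: for $1\le j\le n-1$ with $a_{i-1}\le j<a_i$, $x_j\lessdot x_{j+1}$ if $i$ is odd and $x_j\gtrdot x_{j+1}$ if $i$ is even. Segments: $S_1=\{x_j:1\le j\le a_1\}$, $S_i=\{x_j:a_{i-1}\le j\le a_i\}$ for $2\le i\le t-1$, $S_t=\{x_j:a_{t-1}\le j\le n\}$ (each a chain). Shared elements $x_{a_i}$, $i\in[t-1]$, are peaks (cover two elements) for $i$ odd and valleys (covered by two elements) for $i$ even; the peak (valley) of $S_i$ is the shared element of $S_i$ that is a peak (valley), if any. $\breve S_i$ is the set of non-shared elements of $S_i$, $\beta_i=\#\breve S_i=\alpha_i-1$, $s_{(i,j)}$ is the $j$-th smallest element of $\breve S_i$. For $q\in F$ and an order ideal $I\in\mathcal J(F)$: $\hat\chi_q(I)=1$ if $q\in I$, else $0$; $T_q(I)=1$ if $q\in\min(F\setminus I)$, $-1$ if $q\in\max(I)$, $0$ otherwise. Write $\hat\chi_{(i,j)}=\hat\chi_{s_{(i,j)}}$. Convention: statistics indexed by nonexistent elements are identically zero. *)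

theory Defs
  imports Main
begin

text \<open>A fence with composition alpha (a list of length t, alpha_k = alpha ! (k-1)).
  The element x_j is represented by the natural number j, for 1 <= j <= n.\<close>

definition apos :: "nat list \<Rightarrow> nat \<Rightarrow> nat" where
  "apos \<alpha> i = sum_list (take i \<alpha>)"

definition fn :: "nat list \<Rightarrow> nat" where
  "fn \<alpha> = apos \<alpha> (length \<alpha>) - 1"

definition elems :: "nat list \<Rightarrow> nat set" where
  "elems \<alpha> = {1..fn \<alpha>}"

definition alph :: "nat list \<Rightarrow> nat \<Rightarrow> nat" where
  "alph \<alpha> i = \<alpha> ! (i - 1)"

definition cov :: "nat list \<Rightarrow> nat \<Rightarrow> nat \<Rightarrow> bool" where
  "cov \<alpha> x y \<longleftrightarrow> (\<exists>i j. 1 \<le> i \<and> i \<le> length \<alpha> \<and> 1 \<le> j \<and> j \<le> fn \<alpha> - 1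
      \<and> apos \<alpha> (i - 1) \<le> j \<and> j < apos \<alpha> i
      \<and> (if odd i then x = j \<and> y = j + 1 else x = j + 1 \<and> y = j))"

definition leq :: "nat list \<Rightarrow> nat \<Rightarrow> nat \<Rightarrow> bool" where
  "leq \<alpha> x y \<longleftrightarrow> x \<in> elems \<alpha> \<and> y \<in> elems \<alpha> \<and> (cov \<alpha>)\<^sup>*\<^sup>* x y"

definition less :: "nat list \<Rightarrow> nat \<Rightarrow> nat \<Rightarrow> bool" where
  "less \<alpha> x y \<longleftrightarrow> leq \<alpha> x y \<and> x \<noteq> y"

definition ideals :: "nat list \<Rightarrow> nat set set" where
  "ideals \<alpha> = {I. I \<subseteq> elems \<alpha> \<and> (\<forall>x\<in>I. \<forall>y. leq \<alpha> y x \<longrightarrow> y \<in> I)}"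

definition chi :: "nat \<Rightarrow> nat set \<Rightarrow> int" where
  "chi q I = (if q \<in> I then 1 else 0)"

definition chio :: "nat option \<Rightarrow> nat set \<Rightarrow> int" where
  "chio q I = (case q of None \<Rightarrow> 0 | Some x \<Rightarrow> chi x I)"

definition Tstat :: "nat list \<Rightarrow> nat \<Rightarrow> nat set \<Rightarrow> int" where
  "Tstat \<alpha> q I =
     (if q \<in> elems \<alpha> - I \<and> \<not> (\<exists>y \<in> elems \<alpha> - I. less \<alpha> y q) then 1
      else if q \<in> I \<and> \<not> (\<exists>y \<in> I. less \<alpha> q y) then -1 else 0)"

definition segment :: "nat list \<Rightarrow> nat \<Rightarrow> nat set" where
  "segment \<alpha> i =
     (if i = 1 then {1..apos \<alpha> 1}
      else if i < length \<alpha> then {apos \<alpha> (i - 1)..apos \<alpha> i}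
      else {apos \<alpha> (length \<alpha> - 1)..fn \<alpha>})"

definition shared :: "nat list \<Rightarrow> nat set" where
  "shared \<alpha> = {apos \<alpha> k | k. 1 \<le> k \<and> k \<le> length \<alpha> - 1}"

definition is_peak :: "nat list \<Rightarrow> nat \<Rightarrow> bool" where
  "is_peak \<alpha> q \<longleftrightarrow> card {y \<in> elems \<alpha>. cov \<alpha> y q} = 2"

definition is_valley :: "nat list \<Rightarrow> nat \<Rightarrow> bool" where
  "is_valley \<alpha> q \<longleftrightarrow> card {y \<in> elems \<alpha>. cov \<alpha> q y} = 2"

definition peak :: "nat list \<Rightarrow> nat \<Rightarrow> nat option" where
  "peak \<alpha> i = (if \<exists>q. q \<in> segment \<alpha> i \<inter> shared \<alpha> \<and> is_peak \<alpha> q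
      then Some (THE q. q \<in> segment \<alpha> i \<inter> shared \<alpha> \<and> is_peak \<alpha> q) else None)"

definition valley :: "nat list \<Rightarrow> nat \<Rightarrow> nat option" where
  "valley \<alpha> i = (if \<exists>q. q \<in> segment \<alpha> i \<inter> shared \<alpha> \<and> is_valley \<alpha> q
      then Some (THE q. q \<in> segment \<alpha> i \<inter> shared \<alpha> \<and> is_valley \<alpha> q) else None)"

definition breveS :: "nat list \<Rightarrow> nat \<Rightarrow> nat set" where
  "breveS \<alpha> i = segment \<alpha> i - shared \<alpha>"

definition sel :: "nat list \<Rightarrow> nat \<Rightarrow> nat \<Rightarrow> nat" where
  "sel \<alpha> i j = (THE x. x \<in> breveS \<alpha> i \<and> card {y \<in> breveS \<alpha> i. less \<alpha> y x} = j - 1)"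

definition interval :: "nat list \<Rightarrow> nat \<Rightarrow> nat \<Rightarrow> nat set" where
  "interval \<alpha> a b = {u \<in> elems \<alpha>. leq \<alpha> a u \<and> leq \<alpha> u b}"

end

theory Submission
  imports Defs
begin


locale fence =
  fixes \<alpha> :: "nat list"
  assumes len2: "length \<alpha> \<ge> 2"
    and posk: "\<forall>k \<in> set \<alpha>. k > 0"
    and hd2: "hd \<alpha> \<ge> 2" and last2: "last \<alpha> \<ge> 2"
begin

lemma nth_pos: "k < length \<alpha> \<Longrightarrow> \<alpha> ! k > 0"
  using posk nth_mem by blast

lemma apos_Suc: "k < length \<alpha> \<Longrightarrow> apos \<alpha> (Suc k) = apos \<alpha> k + \<alpha> ! k"
  by (simp add: apos_def take_Suc_conv_app_nth)

lemma apos_0[simp]: "apos \<alpha> 0 = 0" by (simp add: apos_def)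

lemma apos_mono: "k \<le> l \<Longrightarrow> apos \<alpha> k \<le> apos \<alpha> l"
proof -
  assume "k \<le> l"
  then obtain d where "l = k + d" using le_Suc_ex by blast
  then show ?thesis by (simp add: apos_def take_add)
qed

lemma apos_less: "k < l \<Longrightarrow> l \<le> length \<alpha> \<Longrightarrow> apos \<alpha> k < apos \<alpha> l"
proof -
  assume a: "k < l" "l \<le> length \<alpha>"
  have "apos \<alpha> k < apos \<alpha> (Suc k)" using apos_Suc[of k] nth_pos[of k] a by simp
  also have "\<dots> \<le> apos \<alpha> l" using apos_mono a by simp
  finally show ?thesis .
qed

lemma apos_1: "apos \<alpha> 1 = hd \<alpha>"
  using len2 by (cases \<alpha>) (auto simp: apos_def)

lemma apos_len: "apos \<alpha> (length \<alpha>) = fn \<alpha> + 1"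
proof -
  have "apos \<alpha> (length \<alpha>) \<ge> apos \<alpha> 1" using apos_mono len2 by simp
  then show ?thesis using apos_1 hd2 by (simp add: fn_def)
qed

lemma apos_last: "apos \<alpha> (length \<alpha> - 1) + 2 \<le> fn \<alpha> + 1"
proof -
  have "apos \<alpha> (length \<alpha>) = apos \<alpha> (length \<alpha> - 1) + \<alpha> ! (length \<alpha> - 1)"
  proof -
    obtain m where m: "length \<alpha> = Suc m" using len2 by (cases "length \<alpha>") auto
    show ?thesis using apos_Suc[of m] m by simp
  qed
  moreover have "\<alpha> ! (length \<alpha> - 1) = last \<alpha>" using len2 by (subst last_conv_nth) auto
  ultimately show ?thesis using apos_len last2 by simp
qed

lemma apos_ge2: "1 \<le> k \<Longrightarrow> 2 \<le> apos \<alpha> k"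
  using apos_mono[of 1 k] apos_1 hd2 by simp

lemma seg_exists: "j < apos \<alpha> (length \<alpha>) \<Longrightarrow> \<exists>i. 1 \<le> i \<and> i \<le> length \<alpha> \<and> apos \<alpha> (i - 1) \<le> j \<and> j < apos \<alpha> i"
proof -
  assume a: "j < apos \<alpha> (length \<alpha>)"
  define i where "i = (LEAST i. j < apos \<alpha> i)"
  have 1: "j < apos \<alpha> i" unfolding i_def by (rule LeastI[of _ "length \<alpha>"]) (rule a)
  have 2: "i \<le> length \<alpha>" unfolding i_def by (rule Least_le) (rule a)
  have 3: "i \<noteq> 0" using 1 by (cases i) auto
  have 4: "\<not> j < apos \<alpha> (i - 1)" unfolding i_def by (rule not_less_Least) (use 3 i_def in auto)
  show ?thesis using 1 2 3 4 by (intro exI[of _ i]) auto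
qed

lemma seg_unique:
  assumes "1 \<le> i" "i \<le> length \<alpha>" "apos \<alpha> (i - 1) \<le> j" "j < apos \<alpha> i"
    "1 \<le> k" "k \<le> length \<alpha>" "apos \<alpha> (k - 1) \<le> j" "j < apos \<alpha> k"
  shows "i = k"
proof (rule ccontr)
  assume "i \<noteq> k"
  then have "i \<le> k - 1 \<or> k \<le> i - 1" by auto
  then show False using apos_mono assms by (meson le_trans not_le)
qed


abbreviation up :: "nat \<Rightarrow> bool" where "up k \<equiv> cov \<alpha> k (Suc k)"
abbreviation dn :: "nat \<Rightarrow> bool" where "dn k \<equiv> cov \<alpha> (Suc k) k"

lemma cov_adj: "cov \<alpha> x y \<Longrightarrow> y = Suc x \<or> x = Suc y"
  unfolding cov_def by (auto split: if_splits)

lemma cov_cases: "cov \<alpha> x y \<Longrightarrow> (y = Suc x \<and> up x) \<or> (x = Suc y \<and> dn y)"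
  using cov_adj by blast

lemma cov_range: "cov \<alpha> x y \<Longrightarrow> x \<in> elems \<alpha> \<and> y \<in> elems \<alpha>"
  unfolding cov_def elems_def by (auto split: if_splits)

lemma up_range: "up k \<Longrightarrow> 1 \<le> k \<and> Suc k \<le> fn \<alpha>"
  using cov_range[of k "Suc k"] by (auto simp: elems_def)
lemma dn_range: "dn k \<Longrightarrow> 1 \<le> k \<and> Suc k \<le> fn \<alpha>"
  using cov_range[of "Suc k" k] by (auto simp: elems_def)

lemma edge_dir:
  assumes "1 \<le> i" "i \<le> length \<alpha>" "apos \<alpha> (i - 1) \<le> k" "k < apos \<alpha> i" "1 \<le> k" "Suc k \<le> fn \<alpha>"
  shows "(up k \<longleftrightarrow> odd i) \<and> (dn k \<longleftrightarrow> even i)"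
proof -
  have kf: "k \<le> fn \<alpha> - 1" using assms(6) by simp
  have "up k \<longleftrightarrow> odd i"
  proof
    assume "up k"
    then obtain i' j where h: "1 \<le> i'" "i' \<le> length \<alpha>" "1 \<le> j" "j \<le> fn \<alpha> - 1"
      "apos \<alpha> (i' - 1) \<le> j" "j < apos \<alpha> i'"
      "(if odd i' then k = j \<and> Suc k = j + 1 else k = j + 1 \<and> Suc k = j)"
      unfolding cov_def by blast
    have o: "odd i' \<and> j = k" using h(7) by (cases "odd i'") auto
    have "i = i'" using seg_unique[OF assms(1-4) h(1) h(2)] h(5) h(6) o by blast
    then show "odd i" using o by simp
  next
    assume o: "odd i"
    have "1 \<le> i \<and> i \<le> length \<alpha> \<and> 1 \<le> k \<and> k \<le> fn \<alpha> - 1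
      \<and> apos \<alpha> (i - 1) \<le> k \<and> k < apos \<alpha> i
      \<and> (if odd i then k = k \<and> Suc k = k + 1 else k = k + 1 \<and> Suc k = k)"
      using assms kf o by simp
    then show "up k" unfolding cov_def by blast
  qed
  moreover have "dn k \<longleftrightarrow> even i"
  proof
    assume "dn k"
    then obtain i' j where h: "1 \<le> i'" "i' \<le> length \<alpha>" "1 \<le> j" "j \<le> fn \<alpha> - 1"
      "apos \<alpha> (i' - 1) \<le> j" "j < apos \<alpha> i'"
      "(if odd i' then Suc k = j \<and> k = j + 1 else Suc k = j + 1 \<and> k = j)"
      unfolding cov_def by blast
    have o: "even i' \<and> j = k" using h(7) by (cases "odd i'") auto
    have "i = i'" using seg_unique[OF assms(1-4) h(1) h(2)] h(5) h(6) o by blast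
    then show "even i" using o by simp
  next
    assume o: "even i"
    have "1 \<le> i \<and> i \<le> length \<alpha> \<and> 1 \<le> k \<and> k \<le> fn \<alpha> - 1
      \<and> apos \<alpha> (i - 1) \<le> k \<and> k < apos \<alpha> i
      \<and> (if odd i then Suc k = k \<and> k = k + 1 else Suc k = k + 1 \<and> k = k)"
      using assms kf o by simp
    then show "dn k" unfolding cov_def by blast
  qed
  ultimately show ?thesis by blast
qed

lemma edge_seg: "1 \<le> k \<Longrightarrow> Suc k \<le> fn \<alpha> \<Longrightarrow>
   \<exists>i. 1 \<le> i \<and> i \<le> length \<alpha> \<and> apos \<alpha> (i - 1) \<le> k \<and> k < apos \<alpha> i"
  using seg_exists apos_len by simp

lemma up_dn_excl: "\<not> (up k \<and> dn k)"
proof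
  assume a: "up k \<and> dn k"
  then have "1 \<le> k" "Suc k \<le> fn \<alpha>" using up_range by auto
  then obtain i where "1 \<le> i \<and> i \<le> length \<alpha> \<and> apos \<alpha> (i - 1) \<le> k \<and> k < apos \<alpha> i"
    using edge_seg by blast
  with edge_dir[of i k] a \<open>1 \<le> k\<close> \<open>Suc k \<le> fn \<alpha>\<close> show False by auto
qed

lemma cov_asym: "cov \<alpha> x y \<Longrightarrow> \<not> cov \<alpha> y x"
  using cov_cases up_dn_excl by (metis n_not_Suc_n)

lemma cov_irrefl: "\<not> cov \<alpha> x x"
  using cov_adj by (metis n_not_Suc_n)

definition path :: "nat \<Rightarrow> nat \<Rightarrow> bool" where
  "path x y \<longleftrightarrow> (x \<le> y \<and> (\<forall>k. x \<le> k \<and> k < y \<longrightarrow> up k)) \<or> (y \<le> x \<and> (\<forall>k. y \<le> k \<and> k < x \<longrightarrow> dn k))"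

lemma rt_path: "(cov \<alpha>)\<^sup>*\<^sup>* x y \<Longrightarrow> path x y"
proof (induction rule: rtranclp_induct)
  case base
  show ?case unfolding path_def by auto
next
  case (step y z)
  from cov_cases[OF step.hyps(2)] show ?case
  proof
    assume h: "z = Suc y \<and> up y"
    show ?thesis
    proof (cases "x \<le> y")
      case True
      have "\<forall>k. x \<le> k \<and> k < y \<longrightarrow> up k"
      proof (cases "x = y")
        case False
        then show ?thesis using step.IH True unfolding path_def by auto
      qed auto
      then have "\<forall>k. x \<le> k \<and> k < z \<longrightarrow> up k" using h less_Suc_eq by auto
      then show ?thesis using True h unfolding path_def by auto
    next
      case False
      then have "dn y" using step.IH unfolding path_def by auto
      then show ?thesis using h up_dn_excl by blast
    qed
  next
    assume h: "y = Suc z \<and> dn z"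
    show ?thesis
    proof (cases "x \<le> z")
      case True
      then have "up z" using step.IH h unfolding path_def by auto
      then show ?thesis using h up_dn_excl by blast
    next
      case False
      then have "y \<le> x" using h by auto
      have "\<forall>k. y \<le> k \<and> k < x \<longrightarrow> dn k"
      proof (cases "x = y")
        case False
        then show ?thesis using step.IH \<open>y \<le> x\<close> unfolding path_def by auto
      qed auto
      then have "\<forall>k. z \<le> k \<and> k < x \<longrightarrow> dn k" using h
        by (metis Suc_leI le_neq_implies_less)
      then show ?thesis using False unfolding path_def by auto
    qed
  qed
qed

lemma up_rt: "(\<forall>k. x \<le> k \<and> k < x + d \<longrightarrow> up k) \<Longrightarrow> (cov \<alpha>)\<^sup>*\<^sup>* x (x + d)"
proof (induction d)
  case 0 then show ?case by simp
next
  case (Suc d)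
  then have "(cov \<alpha>)\<^sup>*\<^sup>* x (x + d)" by simp
  moreover have "up (x + d)" using Suc.prems by simp
  ultimately show ?case by (simp add: rtranclp.rtrancl_into_rtrancl)
qed

lemma dn_rt: "(\<forall>k. y \<le> k \<and> k < y + d \<longrightarrow> dn k) \<Longrightarrow> (cov \<alpha>)\<^sup>*\<^sup>* (y + d) y"
proof (induction d)
  case 0 then show ?case by simp
next
  case (Suc d)
  then have "(cov \<alpha>)\<^sup>*\<^sup>* (y + d) y" by simp
  moreover have "dn (y + d)" using Suc.prems by simp
  ultimately show ?case by (simp add: converse_rtranclp_into_rtranclp)
qed

lemma path_rt: "path x y \<Longrightarrow> (cov \<alpha>)\<^sup>*\<^sup>* x y"
  unfolding path_def
proof (elim disjE conjE)
  assume "x \<le> y" "\<forall>k. x \<le> k \<and> k < y \<longrightarrow> up k"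
  then show ?thesis using up_rt[of x "y - x"] by simp
next
  assume "y \<le> x" "\<forall>k. y \<le> k \<and> k < x \<longrightarrow> dn k"
  then show ?thesis using dn_rt[of y "x - y"] by simp
qed

lemma leq_path: "leq \<alpha> x y \<longleftrightarrow> x \<in> elems \<alpha> \<and> y \<in> elems \<alpha> \<and> path x y"
  unfolding leq_def using rt_path path_rt by blast

lemma leq_antisym: "leq \<alpha> x y \<Longrightarrow> leq \<alpha> y x \<Longrightarrow> x = y"
  unfolding leq_path path_def using up_dn_excl
  by (metis le_antisym le_refl nat_less_le)

lemma leq_trans: "leq \<alpha> x y \<Longrightarrow> leq \<alpha> y z \<Longrightarrow> leq \<alpha> x z"
  unfolding leq_def by auto

lemma leq_refl: "x \<in> elems \<alpha> \<Longrightarrow> leq \<alpha> x x"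
  unfolding leq_def by auto

lemma cov_leq: "cov \<alpha> x y \<Longrightarrow> leq \<alpha> x y"
  unfolding leq_def using cov_range by auto

lemma ivl_up: assumes "leq \<alpha> x y" "x \<le> y"
  shows "{u \<in> elems \<alpha>. leq \<alpha> x u \<and> leq \<alpha> u y} = {x..y}"
proof
  show "{u \<in> elems \<alpha>. leq \<alpha> x u \<and> leq \<alpha> u y} \<subseteq> {x..y}"
  proof
    fix u assume u: "u \<in> {u \<in> elems \<alpha>. leq \<alpha> x u \<and> leq \<alpha> u y}"
    then have p1: "path x u" and p2: "path u y" by (auto simp: leq_path)
    have "\<not> u < x"
    proof
      assume "u < x"
      then have "dn u" "up u" using p1 p2 assms(2) unfolding path_def by auto
      then show False using up_dn_excl by blast
    qed
    moreover have "\<not> y < u"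
    proof
      assume "y < u"
      then have "dn y" "up y" using p1 p2 assms(2) unfolding path_def by auto
      then show False using up_dn_excl by blast
    qed
    ultimately show "u \<in> {x..y}" by auto
  qed
next
  show "{x..y} \<subseteq> {u \<in> elems \<alpha>. leq \<alpha> x u \<and> leq \<alpha> u y}"
  proof
    fix u assume u: "u \<in> {x..y}"
    have ex: "x \<in> elems \<alpha>" "y \<in> elems \<alpha>" "path x y" using assms(1) by (auto simp: leq_path)
    then have ue: "u \<in> elems \<alpha>" using u by (auto simp: elems_def)
    show "u \<in> {u \<in> elems \<alpha>. leq \<alpha> x u \<and> leq \<alpha> u y}"
    proof (cases "x = y")
      case True then show ?thesis using u ue by (auto simp: leq_path path_def)
    next
      case False
      then have "\<forall>k. x \<le> k \<and> k < y \<longrightarrow> up k" using ex(3) assms(2) unfolding path_def by auto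
      then show ?thesis using u ue ex by (auto simp: leq_path path_def)
    qed
  qed
qed

lemma ivl_dn: assumes "leq \<alpha> x y" "y \<le> x"
  shows "{u \<in> elems \<alpha>. leq \<alpha> x u \<and> leq \<alpha> u y} = {y..x}"
proof
  show "{u \<in> elems \<alpha>. leq \<alpha> x u \<and> leq \<alpha> u y} \<subseteq> {y..x}"
  proof
    fix u assume u: "u \<in> {u \<in> elems \<alpha>. leq \<alpha> x u \<and> leq \<alpha> u y}"
    then have p1: "path x u" and p2: "path u y" by (auto simp: leq_path)
    have "\<not> u < y"
    proof
      assume "u < y"
      then have "dn u" "up u" using p1 p2 assms(2) unfolding path_def by auto
      then show False using up_dn_excl by blast
    qed
    moreover have "\<not> x < u"
    proof
      assume "x < u"
      then have "dn x" "up x" using p1 p2 assms(2) unfolding path_def by auto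
      then show False using up_dn_excl by blast
    qed
    ultimately show "u \<in> {y..x}" by auto
  qed
next
  show "{y..x} \<subseteq> {u \<in> elems \<alpha>. leq \<alpha> x u \<and> leq \<alpha> u y}"
  proof
    fix u assume u: "u \<in> {y..x}"
    have ex: "x \<in> elems \<alpha>" "y \<in> elems \<alpha>" "path x y" using assms(1) by (auto simp: leq_path)
    then have ue: "u \<in> elems \<alpha>" using u by (auto simp: elems_def)
    show "u \<in> {u \<in> elems \<alpha>. leq \<alpha> x u \<and> leq \<alpha> u y}"
    proof (cases "x = y")
      case True then show ?thesis using u ue by (auto simp: leq_path path_def)
    next
      case False
      then have "\<forall>k. y \<le> k \<and> k < x \<longrightarrow> dn k" using ex(3) assms(2) unfolding path_def by auto
      then show ?thesis using u ue ex by (auto simp: leq_path path_def)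
    qed
  qed
qed


end


context fence begin
lemma ideal_down: "I \<in> ideals \<alpha> \<Longrightarrow> x \<in> I \<Longrightarrow> leq \<alpha> y x \<Longrightarrow> y \<in> I"
  unfolding ideals_def by blast
lemma ideal_sub: "I \<in> ideals \<alpha> \<Longrightarrow> I \<subseteq> elems \<alpha>"
  unfolding ideals_def by blast

lemma Tstat_cov:
  assumes u: "u \<in> elems \<alpha>" and I: "I \<in> ideals \<alpha>"
  shows "Tstat \<alpha> u I = (if u \<notin> I \<and> (\<forall>w. cov \<alpha> w u \<longrightarrow> w \<in> I) then 1
     else if u \<in> I \<and> (\<forall>z. cov \<alpha> u z \<longrightarrow> z \<notin> I) then -1 else 0)"
proof -
  have h1: "(\<exists>y\<in>elems \<alpha> - I. less \<alpha> y u) \<longleftrightarrow> (\<exists>w. cov \<alpha> w u \<and> w \<notin> I)"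
  proof
    assume "\<exists>y\<in>elems \<alpha> - I. less \<alpha> y u"
    then obtain y where y: "y \<in> elems \<alpha>" "y \<notin> I" "leq \<alpha> y u" "y \<noteq> u" unfolding less_def by blast
    then have "(cov \<alpha>)\<^sup>*\<^sup>* y u" unfolding leq_def by blast
    then obtain w where w: "(cov \<alpha>)\<^sup>*\<^sup>* y w" "cov \<alpha> w u" using y(4)
      by (metis rtranclp.cases)
    then have "leq \<alpha> y w" using y cov_range unfolding leq_def by blast
    then have "w \<notin> I" using y ideal_down[OF I] by blast
    then show "\<exists>w. cov \<alpha> w u \<and> w \<notin> I" using w by blast
  next
    assume "\<exists>w. cov \<alpha> w u \<and> w \<notin> I"
    then obtain w where w: "cov \<alpha> w u" "w \<notin> I" by blast
    then have "less \<alpha> w u" unfolding less_def using cov_leq cov_irrefl by blast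
    then show "\<exists>y\<in>elems \<alpha> - I. less \<alpha> y u" using w cov_range by blast
  qed
  have h2: "(\<exists>y\<in>I. less \<alpha> u y) \<longleftrightarrow> (\<exists>z. cov \<alpha> u z \<and> z \<in> I)"
  proof
    assume "\<exists>y\<in>I. less \<alpha> u y"
    then obtain y where y: "y \<in> I" "leq \<alpha> u y" "y \<noteq> u" unfolding less_def by blast
    then have ye: "y \<in> elems \<alpha>" using ideal_sub[OF I] by blast
    have "(cov \<alpha>)\<^sup>*\<^sup>* u y" using y unfolding leq_def by blast
    then obtain z where z: "cov \<alpha> u z" "(cov \<alpha>)\<^sup>*\<^sup>* z y" using y(3)
      by (metis converse_rtranclpE)
    then have "leq \<alpha> z y" using ye cov_range unfolding leq_def by blast
    then have "z \<in> I" using y ideal_down[OF I] by blast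
    then show "\<exists>z. cov \<alpha> u z \<and> z \<in> I" using z by blast
  next
    assume "\<exists>z. cov \<alpha> u z \<and> z \<in> I"
    then obtain z where z: "cov \<alpha> u z" "z \<in> I" by blast
    then have "less \<alpha> u z" unfolding less_def using cov_leq cov_irrefl by blast
    then show "\<exists>y\<in>I. less \<alpha> u y" using z by blast
  qed
  show ?thesis unfolding Tstat_def using h1 h2 u by auto
qed

lemma shared_iff: "q \<in> shared \<alpha> \<longleftrightarrow> (\<exists>k. 1 \<le> k \<and> k \<le> length \<alpha> - 1 \<and> q = apos \<alpha> k)"
  unfolding shared_def by blast

lemma shared_peak:
  assumes "1 \<le> k" "k \<le> length \<alpha> - 1"
  shows "(is_peak \<alpha> (apos \<alpha> k) \<longleftrightarrow> odd k) \<and> (is_valley \<alpha> (apos \<alpha> k) \<longleftrightarrow> even k)"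
proof -
  define q where "q = apos \<alpha> k"
  have q2: "2 \<le> q" using apos_ge2 assms q_def by simp
  have qf: "Suc q \<le> fn \<alpha>"
    using apos_mono[of k "length \<alpha> - 1"] apos_last assms q_def by simp
  have l: "apos \<alpha> (k - 1) < q" using apos_less[of "k - 1" k] assms q_def by simp
  have r: "q < apos \<alpha> (Suc k)" using apos_less[of k "Suc k"] assms q_def by simp
  have e1: "(up (q - 1) \<longleftrightarrow> odd k) \<and> (dn (q - 1) \<longleftrightarrow> even k)"
    using edge_dir[of k "q - 1"] assms q2 qf l q_def by simp
  have e2: "(up q \<longleftrightarrow> even k) \<and> (dn q \<longleftrightarrow> odd k)"
    using edge_dir[of "Suc k" q] assms q2 qf r q_def by simp
  have qq: "Suc (q - 1) = q" using q2 by simp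
  have s1: "{y \<in> elems \<alpha>. cov \<alpha> y q} = (if odd k then {q - 1, Suc q} else {})"
  proof -
    have "cov \<alpha> y q \<longleftrightarrow> (y = q - 1 \<and> up (q - 1)) \<or> (y = Suc q \<and> dn q)" for y
      using cov_cases[of y q] qq by auto
    then show ?thesis using e1 e2 cov_range by auto
  qed
  have s2: "{y \<in> elems \<alpha>. cov \<alpha> q y} = (if even k then {q - 1, Suc q} else {})"
  proof -
    have "cov \<alpha> q y \<longleftrightarrow> (y = q - 1 \<and> dn (q - 1)) \<or> (y = Suc q \<and> up q)" for y
      using cov_cases[of q y] qq by auto
    then show ?thesis using e1 e2 cov_range by auto
  qed
  have c: "card {q - 1, Suc q} = 2" using q2 by simp
  show ?thesis unfolding is_peak_def is_valley_def q_def[symmetric] s1 s2 using c by auto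
qed

end



locale seg = fence +
  fixes i :: nat
  assumes i1: "1 \<le> i" and ilen: "i \<le> length \<alpha>" and N2: "alph \<alpha> i \<ge> 2"
begin

definition A where "A = apos \<alpha> (i - 1)"
definition B where "B = apos \<alpha> i"
abbreviation N where "N \<equiv> alph \<alpha> i"
definition pos :: "nat \<Rightarrow> nat" where "pos m = (if odd i then A + m else B - m)"

lemma BA: "B = A + N"
proof -
  have "Suc (i - 1) = i" using i1 by simp
  then show ?thesis using apos_Suc[of "i - 1"] ilen i1 unfolding A_def B_def alph_def by simp
qed

lemma A_cases: "(i = 1 \<and> A = 0) \<or> (2 \<le> i \<and> 2 \<le> A)"
  using apos_ge2[of "i - 1"] i1 unfolding A_def by (cases "i = 1") auto

lemma B_cases: "(i = length \<alpha> \<and> B = fn \<alpha> + 1) \<or> (i < length \<alpha> \<and> Suc B \<le> fn \<alpha>)"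
proof (cases "i = length \<alpha>")
  case True then show ?thesis using apos_len unfolding B_def by simp
next
  case False
  then have "B \<le> apos \<alpha> (length \<alpha> - 1)" unfolding B_def using apos_mono ilen by simp
  then show ?thesis using apos_last False ilen by simp
qed

lemma elems_iff: "x \<in> elems \<alpha> \<longleftrightarrow> 1 \<le> x \<and> x \<le> fn \<alpha>"
  unfolding elems_def by simp

lemma A_elems: "A \<in> elems \<alpha> \<longleftrightarrow> 2 \<le> i"
  using A_cases B_cases BA N2 by (auto simp: elems_iff)

lemma B_elems: "B \<in> elems \<alpha> \<longleftrightarrow> i < length \<alpha>"
  using A_cases B_cases BA N2 by (auto simp: elems_iff)

lemma pos_elems: "1 \<le> m \<Longrightarrow> m < N \<Longrightarrow> pos m \<in> elems \<alpha>"
  using A_cases B_cases BA unfolding pos_def by (auto simp: elems_iff)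

lemma pos_cov: assumes "m < N" "pos m \<in> elems \<alpha>" "pos (Suc m) \<in> elems \<alpha>"
  shows "cov \<alpha> (pos m) (pos (Suc m))"
proof (cases "odd i")
  case True
  have "up (A + m)"
    using edge_dir[of i "A + m"] assms i1 ilen BA True
    unfolding pos_def A_def[symmetric] B_def[symmetric] by (simp add: elems_iff)
  then show ?thesis using True unfolding pos_def by simp
next
  case False
  have e: "B - m = Suc (B - Suc m)" using assms BA by simp
  have "dn (B - Suc m)"
    using edge_dir[of i "B - Suc m"] assms i1 ilen BA False e
    unfolding pos_def A_def[symmetric] B_def[symmetric] by (simp add: elems_iff)
  then show ?thesis using False e unfolding pos_def by simp
qed

lemma pos_inj: "inj_on pos {0..N}"
  unfolding inj_on_def pos_def using BA by auto

lemma pos_leq: assumes "a \<le> b" "b \<le> N" "pos a \<in> elems \<alpha>" "pos b \<in> elems \<alpha>"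
  shows "leq \<alpha> (pos a) (pos b)"
proof -
  have "\<And>d. a + d \<le> N \<Longrightarrow> pos (a + d) \<in> elems \<alpha> \<Longrightarrow> leq \<alpha> (pos a) (pos (a + d))"
  proof -
    fix d show "a + d \<le> N \<Longrightarrow> pos (a + d) \<in> elems \<alpha> \<Longrightarrow> leq \<alpha> (pos a) (pos (a + d))"
    proof (induction d)
      case 0 then show ?case using leq_refl by simp
    next
      case (Suc d)
      have e: "pos (a + d) \<in> elems \<alpha>"
      proof (cases d)
        case 0 then show ?thesis using assms by simp
      next
        case (Suc d') then show ?thesis using pos_elems Suc.prems by simp
      qed
      then have "leq \<alpha> (pos a) (pos (a + d))" using Suc by simp
      moreover have "cov \<alpha> (pos (a + d)) (pos (Suc (a + d)))"
        using pos_cov[of "a + d"] e Suc.prems by simp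
      ultimately show ?case using leq_trans cov_leq by simp
    qed
  qed
  from this[of "b - a"] assms show ?thesis by simp
qed

lemma pos_ivl: assumes "a \<le> b" "b \<le> N" "pos a \<in> elems \<alpha>" "pos b \<in> elems \<alpha>"
  shows "{u \<in> elems \<alpha>. leq \<alpha> (pos a) u \<and> leq \<alpha> u (pos b)} = pos ` {a..b}"
proof (cases "odd i")
  case True
  have "{u \<in> elems \<alpha>. leq \<alpha> (pos a) u \<and> leq \<alpha> u (pos b)} = {pos a..pos b}"
    using ivl_up pos_leq assms True unfolding pos_def by simp
  also have "\<dots> = pos ` {a..b}" using True unfolding pos_def by simp
  finally show ?thesis .
next
  case False
  have "{u \<in> elems \<alpha>. leq \<alpha> (pos a) u \<and> leq \<alpha> u (pos b)} = {pos b..pos a}"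
    using ivl_dn pos_leq assms False unfolding pos_def by simp
  also have "\<dots> = pos ` {a..b}"
  proof
    show "{pos b..pos a} \<subseteq> pos ` {a..b}"
    proof
      fix x assume x: "x \<in> {pos b..pos a}"
      then have "x = pos (B - x)" "B - x \<in> {a..b}" using False assms BA unfolding pos_def by auto
      then show "x \<in> pos ` {a..b}" by blast
    qed
    show "pos ` {a..b} \<subseteq> {pos b..pos a}" using False assms BA unfolding pos_def by auto
  qed
  finally show ?thesis .
qed

lemma pos_leq_iff: assumes "a \<le> N" "b \<le> N" "pos a \<in> elems \<alpha>" "pos b \<in> elems \<alpha>"
  shows "leq \<alpha> (pos a) (pos b) \<longleftrightarrow> a \<le> b"
proof
  assume l: "leq \<alpha> (pos a) (pos b)"
  show "a \<le> b"
  proof (rule ccontr)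
    assume "\<not> a \<le> b"
    then have "leq \<alpha> (pos b) (pos a)" using pos_leq assms by simp
    then have "pos a = pos b" using l leq_antisym by blast
    then have "a = b" using pos_inj assms unfolding inj_on_def by simp
    then show False using \<open>\<not> a \<le> b\<close> by simp
  qed
qed (use pos_leq assms in simp)


lemma pos_adj: assumes "1 \<le> m" "m < N"
  shows "pos (m - 1) = pos m - 1 \<and> pos (Suc m) = Suc (pos m) \<or> pos (m - 1) = Suc (pos m) \<and> pos (Suc m) = pos m - 1"
  using assms BA unfolding pos_def by auto

lemma lower_cov: assumes "1 \<le> m" "m < N"
  shows "cov \<alpha> w (pos m) \<longleftrightarrow> pos (m - 1) \<in> elems \<alpha> \<and> w = pos (m - 1)"
proof
  assume c: "cov \<alpha> w (pos m)"
  have we: "w \<in> elems \<alpha>" using cov_range c by blast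
  have pm: "pos m \<in> elems \<alpha>" using pos_elems assms by simp
  have "w = pos m - 1 \<or> w = Suc (pos m)" using cov_adj[OF c] by auto
  then have "w = pos (m - 1) \<or> w = pos (Suc m)" using pos_adj[OF assms] by auto
  moreover have "w \<noteq> pos (Suc m)"
  proof
    assume "w = pos (Suc m)"
    then have "cov \<alpha> (pos m) w" using pos_cov[of m] assms we pm by simp
    then show False using cov_asym c by blast
  qed
  ultimately show "pos (m - 1) \<in> elems \<alpha> \<and> w = pos (m - 1)" using we by simp
next
  assume "pos (m - 1) \<in> elems \<alpha> \<and> w = pos (m - 1)"
  then show "cov \<alpha> w (pos m)" using pos_cov[of "m - 1"] pos_elems[OF assms] assms by simp
qed

lemma upper_cov: assumes "1 \<le> m" "m < N"
  shows "cov \<alpha> (pos m) z \<longleftrightarrow> pos (Suc m) \<in> elems \<alpha> \<and> z = pos (Suc m)"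
proof
  assume c: "cov \<alpha> (pos m) z"
  have ze: "z \<in> elems \<alpha>" using cov_range c by blast
  have pm: "pos m \<in> elems \<alpha>" using pos_elems assms by simp
  have "z = pos m - 1 \<or> z = Suc (pos m)" using cov_adj[OF c] by auto
  then have "z = pos (m - 1) \<or> z = pos (Suc m)" using pos_adj[OF assms] by auto
  moreover have "z \<noteq> pos (m - 1)"
  proof
    assume "z = pos (m - 1)"
    then have "cov \<alpha> z (pos m)" using pos_cov[of "m - 1"] assms ze pm by simp
    then show False using cov_asym c by blast
  qed
  ultimately show "pos (Suc m) \<in> elems \<alpha> \<and> z = pos (Suc m)" using ze by simp
next
  assume "pos (Suc m) \<in> elems \<alpha> \<and> z = pos (Suc m)"
  then show "cov \<alpha> (pos m) z" using pos_cov[of m] pos_elems[OF assms] assms by simp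
qed

lemma not_shared: "A < q \<Longrightarrow> q < B \<Longrightarrow> q \<notin> shared \<alpha>"
proof
  assume q: "A < q" "q < B" "q \<in> shared \<alpha>"
  then obtain k where k: "1 \<le> k" "k \<le> length \<alpha> - 1" "q = apos \<alpha> k" using shared_iff by blast
  show False
  proof (cases "k \<le> i - 1")
    case True then show False using apos_mono[OF True] q k unfolding A_def by simp
  next
    case False then have "i \<le> k" by simp
    then show False using apos_mono[of i k] q k unfolding B_def by simp
  qed
qed

lemma A_shared: "2 \<le> i \<Longrightarrow> A \<in> shared \<alpha>"
  unfolding shared_iff A_def using ilen by (intro exI[of _ "i - 1"]) auto

lemma B_shared: "i < length \<alpha> \<Longrightarrow> B \<in> shared \<alpha>"
  unfolding shared_iff B_def using i1 by (intro exI[of _ i]) auto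

lemma segment_eq: "segment \<alpha> i = (if i = 1 then {1..B} else if i < length \<alpha> then {A..B} else {A..B - 1})"
  unfolding segment_def A_def B_def using apos_len ilen by auto

lemma shared_ge2: "q \<in> shared \<alpha> \<Longrightarrow> 2 \<le> q"
  using shared_iff apos_ge2 by auto

lemma breveS_eq: "breveS \<alpha> i = {A + 1..B - 1}"
proof -
  have "segment \<alpha> i - shared \<alpha> = {A + 1..B - 1}"
  proof
    show "segment \<alpha> i - shared \<alpha> \<subseteq> {A + 1..B - 1}"
    proof
      fix x assume x: "x \<in> segment \<alpha> i - shared \<alpha>"
      show "x \<in> {A + 1..B - 1}"
        using x A_cases B_cases A_shared B_shared BA N2 len2 unfolding segment_eq
        by (auto split: if_splits simp: le_less)
    qed
    show "{A + 1..B - 1} \<subseteq> segment \<alpha> i - shared \<alpha>"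
      using not_shared A_cases B_cases BA N2 unfolding segment_eq by auto
  qed
  then show ?thesis unfolding breveS_def .
qed

lemma breveS_pos: "breveS \<alpha> i = pos ` {1..N - 1}"
proof -
  have "{A + 1..B - 1} = pos ` {1..N - 1}"
  proof (cases "odd i")
    case True
    then show ?thesis unfolding pos_def using BA N2 by (simp add: image_add_atLeastAtMost add.commute)
  next
    case False
    show ?thesis
    proof
      show "{A + 1..B - 1} \<subseteq> pos ` {1..N - 1}"
      proof
        fix x assume x: "x \<in> {A + 1..B - 1}"
        then have "x = pos (B - x)" "B - x \<in> {1..N - 1}" using False BA unfolding pos_def by auto
        then show "x \<in> pos ` {1..N - 1}" by blast
      qed
      show "pos ` {1..N - 1} \<subseteq> {A + 1..B - 1}" using False BA unfolding pos_def by auto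
    qed
  qed
  then show ?thesis using breveS_eq by simp
qed

lemma sel_pos: assumes "1 \<le> m" "m \<le> N - 1" shows "sel \<alpha> i m = pos m"
proof -
  have less_set: "{y \<in> breveS \<alpha> i. less \<alpha> y (pos k)} = pos ` {1..<k}" if k: "1 \<le> k" "k \<le> N - 1" for k
  proof
    show "{y \<in> breveS \<alpha> i. less \<alpha> y (pos k)} \<subseteq> pos ` {1..<k}"
    proof
      fix y assume y: "y \<in> {y \<in> breveS \<alpha> i. less \<alpha> y (pos k)}"
      then obtain l where l: "y = pos l" "1 \<le> l" "l \<le> N - 1" using breveS_pos by auto
      have "leq \<alpha> (pos l) (pos k)" "pos l \<noteq> pos k" using y l unfolding less_def by auto
      then have "l \<le> k" "l \<noteq> k" using pos_leq_iff[of l k] pos_elems k l by auto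
      then show "y \<in> pos ` {1..<k}" using l by auto
    qed
    show "pos ` {1..<k} \<subseteq> {y \<in> breveS \<alpha> i. less \<alpha> y (pos k)}"
    proof
      fix y assume "y \<in> pos ` {1..<k}"
      then obtain l where l: "y = pos l" "1 \<le> l" "l < k" by auto
      have "leq \<alpha> (pos l) (pos k)" using pos_leq_iff[of l k] pos_elems k l by auto
      moreover have "pos l \<noteq> pos k" using pos_inj k l unfolding inj_on_def by fastforce
      moreover have "y \<in> breveS \<alpha> i" using breveS_pos l k by auto
      ultimately show "y \<in> {y \<in> breveS \<alpha> i. less \<alpha> y (pos k)}" using l unfolding less_def by simp
    qed
  qed
  have cardk: "card {y \<in> breveS \<alpha> i. less \<alpha> y (pos k)} = k - 1" if k: "1 \<le> k" "k \<le> N - 1" for k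
  proof -
    have "inj_on pos {1..<k}" using pos_inj by (rule inj_on_subset) (use k in auto)
    then show ?thesis using less_set[OF k] card_image by fastforce
  qed
  show ?thesis unfolding sel_def
  proof (rule the_equality)
    show "pos m \<in> breveS \<alpha> i \<and> card {y \<in> breveS \<alpha> i. less \<alpha> y (pos m)} = m - 1"
      using breveS_pos cardk assms by auto
  next
    fix x assume x: "x \<in> breveS \<alpha> i \<and> card {y \<in> breveS \<alpha> i. less \<alpha> y x} = m - 1"
    then obtain k where k: "x = pos k" "1 \<le> k" "k \<le> N - 1" using breveS_pos by auto
    then have "k - 1 = m - 1" using cardk x by simp
    then have "k = m" using k assms by simp
    then show "x = pos m" using k by simp
  qed
qed

lemma seg_shared: "q \<in> segment \<alpha> i \<inter> shared \<alpha> \<longleftrightarrow> (q = A \<and> 2 \<le> i) \<or> (q = B \<and> i < length \<alpha>)"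
proof
  assume q: "q \<in> segment \<alpha> i \<inter> shared \<alpha>"
  then have "q \<noteq> 0" "q \<noteq> 1" using shared_ge2 by fastforce+
  have "A \<le> q \<and> q \<le> B" using q unfolding segment_eq by (auto split: if_splits simp: A_def)
  moreover have "\<not> (A < q \<and> q < B)" using not_shared q by blast
  ultimately have "q = A \<or> q = B" by auto
  then show "(q = A \<and> 2 \<le> i) \<or> (q = B \<and> i < length \<alpha>)"
    using q A_cases B_cases len2 \<open>q \<noteq> 0\<close> unfolding segment_eq by (auto split: if_splits)
next
  assume "(q = A \<and> 2 \<le> i) \<or> (q = B \<and> i < length \<alpha>)"
  then show "q \<in> segment \<alpha> i \<inter> shared \<alpha>"
    using A_shared B_shared A_cases B_cases BA N2 unfolding segment_eq by auto
qed

lemma opt_eq: "{q. P q} = (if c then {x} else {}) \<Longrightarrow>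
   (if \<exists>q. P q then Some (THE q. P q) else None) = (if c then Some x else None)"
  by (cases c) auto

lemma peak_pos: "peak \<alpha> i = (if pos N \<in> elems \<alpha> then Some (pos N) else None)"
proof -
  have pA: "2 \<le> i \<Longrightarrow> is_peak \<alpha> A \<longleftrightarrow> odd (i - 1)" using shared_peak[of "i - 1"] ilen unfolding A_def by simp
  have pB: "i < length \<alpha> \<Longrightarrow> is_peak \<alpha> B \<longleftrightarrow> odd i" using shared_peak[of i] i1 unfolding B_def by simp
  have "{q. q \<in> segment \<alpha> i \<inter> shared \<alpha> \<and> is_peak \<alpha> q} = (if pos N \<in> elems \<alpha> then {pos N} else {})"
  proof (cases "odd i")
    case True
    then have "pos N = B" using BA unfolding pos_def by simp
    then show ?thesis unfolding seg_shared using True pA pB B_elems A_cases B_cases BA N2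
      by (auto simp: elems_iff)
  next
    case False
    then have "pos N = A" "2 \<le> i" using BA i1 unfolding pos_def by (auto intro: Suc_leI simp: le_less)
    then show ?thesis unfolding seg_shared using False pA pB A_elems A_cases B_cases BA N2
      by (auto simp: elems_iff)
  qed
  then show ?thesis unfolding peak_def by (rule opt_eq)
qed

lemma valley_pos: "valley \<alpha> i = (if pos 0 \<in> elems \<alpha> then Some (pos 0) else None)"
proof -
  have pA: "2 \<le> i \<Longrightarrow> is_valley \<alpha> A \<longleftrightarrow> even (i - 1)" using shared_peak[of "i - 1"] ilen unfolding A_def by simp
  have pB: "i < length \<alpha> \<Longrightarrow> is_valley \<alpha> B \<longleftrightarrow> even i" using shared_peak[of i] i1 unfolding B_def by simp
  have "{q. q \<in> segment \<alpha> i \<inter> shared \<alpha> \<and> is_valley \<alpha> q} = (if pos 0 \<in> elems \<alpha> then {pos 0} else {})"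
  proof (cases "odd i")
    case True
    then have "pos 0 = A" unfolding pos_def by simp
    then show ?thesis unfolding seg_shared using True pA pB A_elems A_cases B_cases BA N2
      by (auto simp: elems_iff)
  next
    case False
    then have "pos 0 = B" "2 \<le> i" using i1 unfolding pos_def by (auto simp: le_less)
    then show ?thesis unfolding seg_shared using False pA pB B_elems A_cases B_cases BA N2
      by (auto simp: elems_iff)
  qed
  then show ?thesis unfolding valley_def by (rule opt_eq)
qed

end



lemma tele0: "(\<Sum>m\<in>{1..n}. (e (m - 1) - 2 * e m + e (Suc m)) :: int) = e 0 - e 1 - e n + e (Suc n)"
  by (induction n) (auto simp: atLeastAtMostSuc_conv)

lemma tele1: "(\<Sum>m\<in>{1..n}. int m * ((e (m - 1) - 2 * e m + e (Suc m)) :: int)) = e 0 - int (n + 1) * e n + int n * e (Suc n)"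
  by (induction n) (auto simp: atLeastAtMostSuc_conv algebra_simps)

lemma tele2: assumes "j \<le> n"
  shows "(\<Sum>m\<in>{Suc j..n}. (c - int m) * ((e (m - 1) - 2 * e m + e (Suc m)) :: int))
   = (c * (e 0 - e 1 - e n + e (Suc n)) - (e 0 - int (n + 1) * e n + int n * e (Suc n)))
   - (c * (e 0 - e 1 - e j + e (Suc j)) - (e 0 - int (j + 1) * e j + int j * e (Suc j)))"
proof -
  let ?f = "\<lambda>m. (c - int m) * ((e (m - 1) - 2 * e m + e (Suc m)) :: int)"
  have split: "{1..n} = {1..j} \<union> {Suc j..n}" using assms by auto
  have "sum ?f {1..n} = sum ?f {1..j} + sum ?f {Suc j..n}"
    unfolding split by (rule sum.union_disjoint) auto
  moreover have "sum ?f {1..k} = c * (e 0 - e 1 - e k + e (Suc k)) - (e 0 - int (k + 1) * e k + int k * e (Suc k))" for k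
  proof -
    have "sum ?f {1..k} = c * (\<Sum>m\<in>{1..k}. (e (m - 1) - 2 * e m + e (Suc m))) - (\<Sum>m\<in>{1..k}. int m * (e (m - 1) - 2 * e m + e (Suc m)))"
      by (simp add: sum_distrib_left sum_subtractf left_diff_distrib)
    then show ?thesis using tele0[of e k] tele1[of e k] by simp
  qed
  ultimately show ?thesis by simp
qed

context seg
begin

definition ev :: "nat set \<Rightarrow> nat \<Rightarrow> int" where
  "ev I k = (if pos k \<in> elems \<alpha> then chi (pos k) I else if k = 0 then 1 else 0)"

lemma T_pos: assumes I: "I \<in> ideals \<alpha>" and m: "1 \<le> m" "m < N"
  shows "Tstat \<alpha> (pos m) I = ev I (m - 1) - 2 * ev I m + ev I (Suc m)"
proof -
  have pm: "pos m \<in> elems \<alpha>" using pos_elems m by simp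
  have l: "(\<forall>w. cov \<alpha> w (pos m) \<longrightarrow> w \<in> I) \<longleftrightarrow> (pos (m - 1) \<in> elems \<alpha> \<longrightarrow> pos (m - 1) \<in> I)"
    using lower_cov[OF m] by auto
  have u: "(\<forall>z. cov \<alpha> (pos m) z \<longrightarrow> z \<notin> I) \<longleftrightarrow> \<not> (pos (Suc m) \<in> elems \<alpha> \<and> pos (Suc m) \<in> I)"
    using upper_cov[OF m] by auto
  have mono1: "pos m \<in> I \<Longrightarrow> pos (m - 1) \<in> elems \<alpha> \<Longrightarrow> pos (m - 1) \<in> I"
    using lower_cov[OF m] cov_leq ideal_down[OF I] by blast
  have mono2: "pos (Suc m) \<in> I \<Longrightarrow> pos (Suc m) \<in> elems \<alpha> \<Longrightarrow> pos m \<in> I"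
    using upper_cov[OF m] cov_leq ideal_down[OF I] by blast
  have e0: "ev I (m - 1) = (if pos (m - 1) \<in> elems \<alpha> \<longrightarrow> pos (m - 1) \<in> I then 1 else 0)"
  proof (cases "pos (m - 1) \<in> elems \<alpha>")
    case True then show ?thesis unfolding ev_def chi_def by simp
  next
    case False
    have "m - 1 = 0"
    proof (rule ccontr)
      assume "m - 1 \<noteq> 0"
      then have "1 \<le> m - 1" "m - 1 < N" using m by auto
      then show False using pos_elems False by blast
    qed
    then show ?thesis using False unfolding ev_def by simp
  qed
  have e1: "ev I m = (if pos m \<in> I then 1 else 0)" using pm unfolding ev_def chi_def by simp
  have e2: "ev I (Suc m) = (if pos (Suc m) \<in> elems \<alpha> \<and> pos (Suc m) \<in> I then 1 else 0)"
    unfolding ev_def chi_def by simp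
  show ?thesis unfolding Tstat_cov[OF pm I] l u e0 e1 e2 using mono1 mono2 by auto
qed

lemma card_pos: "a \<le> b \<Longrightarrow> b \<le> N \<Longrightarrow> card (pos ` {a..b}) = b + 1 - a"
proof -
  assume "a \<le> b" "b \<le> N"
  have "inj_on pos {a..b}" using pos_inj by (rule inj_on_subset) (use \<open>b \<le> N\<close> in auto)
  then show ?thesis by (simp add: card_image)
qed

theorem main_seg:
  assumes I: "I \<in> ideals \<alpha>" and j: "1 \<le> j" "j \<le> N - 1"
  shows "int N * chi (sel \<alpha> i j) I - int j * chio (peak \<alpha> i) I
           - (int N - int j) * chio (valley \<alpha> i) I
       = (if valley \<alpha> i = None then int N - int j else 0)
         - (int N - int j) *
             (\<Sum>u \<in> {u \<in> elems \<alpha>. leq \<alpha> (sel \<alpha> i 1) u \<and> leq \<alpha> u (sel \<alpha> i j)}.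
                int (card (interval \<alpha> (sel \<alpha> i 1) u)) * Tstat \<alpha> u I)
         - int j *
             (\<Sum>u \<in> {u \<in> elems \<alpha>. less \<alpha> (sel \<alpha> i j) u \<and> leq \<alpha> u (sel \<alpha> i (N - 1))}.
                int (card (interval \<alpha> u (sel \<alpha> i (N - 1)))) * Tstat \<alpha> u I)"
proof -
  let ?D = "\<lambda>m. ev I (m - 1) - 2 * ev I m + ev I (Suc m)"
  have N1: "1 \<le> N - 1" using N2 by simp
  have s1: "sel \<alpha> i 1 = pos 1" using sel_pos[of 1] N1 by simp
  have sj: "sel \<alpha> i j = pos j" using sel_pos j by simp
  have sN: "sel \<alpha> i (N - 1) = pos (N - 1)" using sel_pos[of "N - 1"] N1 by simp
  have pe: "\<And>m. 1 \<le> m \<Longrightarrow> m \<le> N - 1 \<Longrightarrow> pos m \<in> elems \<alpha>" using pos_elems N2 by simp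
  have set1: "{u \<in> elems \<alpha>. leq \<alpha> (sel \<alpha> i 1) u \<and> leq \<alpha> u (sel \<alpha> i j)} = pos ` {1..j}"
    unfolding s1 sj using pos_ivl[of 1 j] pe j by simp
  have set2a: "{u \<in> elems \<alpha>. leq \<alpha> (pos j) u \<and> leq \<alpha> u (pos (N - 1))} = pos ` {j..N - 1}"
    using pos_ivl[of j "N - 1"] pe j by simp
  have set2: "{u \<in> elems \<alpha>. less \<alpha> (sel \<alpha> i j) u \<and> leq \<alpha> u (sel \<alpha> i (N - 1))} = pos ` {Suc j..N - 1}"
  proof -
    have "{u \<in> elems \<alpha>. less \<alpha> (sel \<alpha> i j) u \<and> leq \<alpha> u (sel \<alpha> i (N - 1))}
        = {u \<in> elems \<alpha>. leq \<alpha> (pos j) u \<and> leq \<alpha> u (pos (N - 1))} - {pos j}"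
      unfolding sj sN less_def by auto
    also have "\<dots> = pos ` {j..N - 1} - {pos j}" using set2a by simp
    also have "\<dots> = pos ` {Suc j..N - 1}"
    proof
      show "pos ` {j..N - 1} - {pos j} \<subseteq> pos ` {Suc j..N - 1}"
      proof
        fix x assume "x \<in> pos ` {j..N - 1} - {pos j}"
        then obtain m where "m \<in> {j..N - 1}" "x = pos m" "x \<noteq> pos j" by auto
        then have "m \<noteq> j" by auto
        then show "x \<in> pos ` {Suc j..N - 1}" using \<open>m \<in> {j..N - 1}\<close> \<open>x = pos m\<close> by auto
      qed
      show "pos ` {Suc j..N - 1} \<subseteq> pos ` {j..N - 1} - {pos j}"
        using pos_inj j unfolding inj_on_def by fastforce
    qed
    finally show ?thesis .
  qed
  have inj1: "inj_on pos {1..j}" using pos_inj by (rule inj_on_subset) (use j in auto)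
  have inj2: "inj_on pos {Suc j..N - 1}" using pos_inj by (rule inj_on_subset) auto
  have sum1: "(\<Sum>u \<in> {u \<in> elems \<alpha>. leq \<alpha> (sel \<alpha> i 1) u \<and> leq \<alpha> u (sel \<alpha> i j)}.
                int (card (interval \<alpha> (sel \<alpha> i 1) u)) * Tstat \<alpha> u I)
      = (\<Sum>m\<in>{1..j}. int m * ?D m)"
  proof -
    have "(\<Sum>u \<in> pos ` {1..j}. int (card (interval \<alpha> (pos 1) u)) * Tstat \<alpha> u I)
       = (\<Sum>m\<in>{1..j}. int (card (interval \<alpha> (pos 1) (pos m))) * Tstat \<alpha> (pos m) I)"
      by (rule sum.reindex[OF inj1, unfolded comp_def])
    also have "\<dots> = (\<Sum>m\<in>{1..j}. int m * ?D m)"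
    proof (rule sum.cong)
      fix m assume m0: "m \<in> {1..j}"
      have m: "1 \<le> m" "m \<le> j" "m \<le> N" "m < N" "m \<le> N - 1" using m0 j by auto
      have "interval \<alpha> (pos 1) (pos m) = pos ` {1..m}"
      proof -
        have "m \<le> N" "m \<le> N - 1" using m j by auto
        then show ?thesis unfolding interval_def using pos_ivl[of 1 m] pe m by simp
      qed
      then have "card (interval \<alpha> (pos 1) (pos m)) = m" using card_pos[of 1 m] m j by simp
      then show "int (card (interval \<alpha> (pos 1) (pos m))) * Tstat \<alpha> (pos m) I = int m * ?D m"
        using T_pos[OF I, of m] m j by simp
    qed simp
    finally show ?thesis unfolding set1 unfolding s1 .
  qed
  have sum2: "(\<Sum>u \<in> {u \<in> elems \<alpha>. less \<alpha> (sel \<alpha> i j) u \<and> leq \<alpha> u (sel \<alpha> i (N - 1))}.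
                int (card (interval \<alpha> u (sel \<alpha> i (N - 1)))) * Tstat \<alpha> u I)
      = (\<Sum>m\<in>{Suc j..N - 1}. (int N - int m) * ?D m)"
  proof -
    have "(\<Sum>u \<in> pos ` {Suc j..N - 1}. int (card (interval \<alpha> u (pos (N - 1)))) * Tstat \<alpha> u I)
       = (\<Sum>m\<in>{Suc j..N - 1}. int (card (interval \<alpha> (pos m) (pos (N - 1)))) * Tstat \<alpha> (pos m) I)"
      by (rule sum.reindex[OF inj2, unfolded comp_def])
    also have "\<dots> = (\<Sum>m\<in>{Suc j..N - 1}. (int N - int m) * ?D m)"
    proof (rule sum.cong)
      fix m assume m0: "m \<in> {Suc j..N - 1}"
      have m: "1 \<le> m" "j < m" "m \<le> N" "m < N" "m \<le> N - 1" using m0 j by auto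
      have "interval \<alpha> (pos m) (pos (N - 1)) = pos ` {m..N - 1}"
      proof -
        have "1 \<le> m" "m \<le> N - 1" "N - 1 \<le> N" using m j by auto
        then show ?thesis unfolding interval_def using pos_ivl[of m "N - 1"] pe by simp
      qed
      then have "card (interval \<alpha> (pos m) (pos (N - 1))) = N - m" using card_pos[of m "N - 1"] m j by simp
      moreover have "int (N - m) = int N - int m" using m by simp
      ultimately show "int (card (interval \<alpha> (pos m) (pos (N - 1)))) * Tstat \<alpha> (pos m) I = (int N - int m) * ?D m"
        using T_pos[OF I, of m] m j by simp
    qed simp
    finally show ?thesis unfolding set2 unfolding sN .
  qed
  have t1: "(\<Sum>m\<in>{1..j}. int m * ?D m) = ev I 0 - int (j + 1) * ev I j + int j * ev I (Suc j)"
    by (rule tele1)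
  have t2: "(\<Sum>m\<in>{Suc j..N - 1}. (int N - int m) * ?D m)
     = (int N * (ev I 0 - ev I 1 - ev I (N - 1) + ev I (Suc (N - 1))) - (ev I 0 - int (N - 1 + 1) * ev I (N - 1) + int (N - 1) * ev I (Suc (N - 1))))
     - (int N * (ev I 0 - ev I 1 - ev I j + ev I (Suc j)) - (ev I 0 - int (j + 1) * ev I j + int j * ev I (Suc j)))"
    by (rule tele2) (use j in simp)
  have SN: "Suc (N - 1) = N" using N2 by simp
  have cj: "chi (sel \<alpha> i j) I = ev I j" unfolding sj ev_def using pe j by simp
  have cp: "chio (peak \<alpha> i) I = ev I N"
    unfolding peak_pos ev_def chio_def using N2 by simp
  have cv: "chio (valley \<alpha> i) I = (if valley \<alpha> i = None then 0 else ev I 0)"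
    unfolding valley_pos ev_def chio_def by simp
  have cv0: "valley \<alpha> i = None \<Longrightarrow> ev I 0 = 1"
    unfolding valley_pos ev_def by (simp split: if_splits)
  have jN: "int (N - 1) = int N - 1" "int (N - 1 + 1) = int N" using N2 by auto
  show ?thesis
  proof (cases "valley \<alpha> i = None")
    case True
    have vN: "valley \<alpha> i = None" by (rule True)
    have e0: "ev I 0 = 1" by (rule cv0[OF vN])
    show ?thesis unfolding sum1 sum2 t1 t2 cj cp cv SN jN vN e0 by (simp add: algebra_simps chio_def)
  next
    case False
    have vN: "(valley \<alpha> i = None) = False" using False by simp
    show ?thesis unfolding sum1 sum2 t1 t2 cj cp cv SN jN vN by (simp add: algebra_simps)
  qed
qed

end

theorem theorem4p1:
  fixes \<alpha> :: "nat list" and i j :: nat and I :: "nat set"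
  assumes "length \<alpha> \<ge> 2"
    and "\<forall>k \<in> set \<alpha>. k > 0"
    and "hd \<alpha> \<ge> 2" and "last \<alpha> \<ge> 2"
    and "1 \<le> i" and "i \<le> length \<alpha>" and "alph \<alpha> i \<ge> 2"
    and "1 \<le> j" and "j \<le> alph \<alpha> i - 1"
    and "I \<in> ideals \<alpha>"
  shows "int (alph \<alpha> i) * chi (sel \<alpha> i j) I - int j * chio (peak \<alpha> i) I
           - (int (alph \<alpha> i) - int j) * chio (valley \<alpha> i) I
       = (if valley \<alpha> i = None then int (alph \<alpha> i) - int j else 0)
         - (int (alph \<alpha> i) - int j) *
             (\<Sum>u \<in> {u \<in> elems \<alpha>. leq \<alpha> (sel \<alpha> i 1) u \<and> leq \<alpha> u (sel \<alpha> i j)}.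
                int (card (interval \<alpha> (sel \<alpha> i 1) u)) * Tstat \<alpha> u I)
         - int j *
             (\<Sum>u \<in> {u \<in> elems \<alpha>. less \<alpha> (sel \<alpha> i j) u \<and> leq \<alpha> u (sel \<alpha> i (alph \<alpha> i - 1))}.
                int (card (interval \<alpha> u (sel \<alpha> i (alph \<alpha> i - 1)))) * Tstat \<alpha> u I)"
  proof -
  interpret seg \<alpha> i
    by unfold_locales (use assms in auto)
  show ?thesis using main_seg[OF assms(10) assms(8) assms(9)] by simp
qed

end
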